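(* Let $N\ge1$, $T>0$, $M>0$, and let $\alpha\in\mathcal U_M$ be an optimal control for the problem of minimizing $\mathbb V(T)=\frac1N\sum_{i=1}^N\xi_i(T)^2$ over $\mathcal U_M$, where $\xi$ solves $\dot\xi_i=-\xi_i+(1-\alpha_i)\bar\xi$, $\bar\xi=\frac1N\sum_j\xi_j$, from a fixed initial datum $\xi(0)$ with $\bar\xi(0)>0$ and $\xi_1(0)\ge\dots\ge\xi_N(0)$. Let $\lambda=(\lambda_1,\dots,\lambda_N)$ be a covector associated with $\alpha$ by the Pontryagin maximum principle, i.e. $\dot\lambda_i=\frac1N\sum_{j}\alpha_j\lambda_j-\bar\lambda+\lambda_i$ with $\bar\lambda=\frac1N\sum_j\lambda_j$, $\lambda_i(T)=\frac2N\xi_i(T)$, and for almost every $t$, $\alpha(t)$ minimizes $a\mapsto -\bar\xi(t)\sum_i a_i\lambda_i(t)$ over $a\in[0,1]^N$ with $\sum_i a_i\le M$. Define $I_\lambda(t)=\{i:\lambda_i(t)\ge0\}$ and $I_\lambda^+(t)=\{i:\lambda_i(t)>0\}$. Then for almost every $t\in[0,T]$: if $I_\lambda(t)=\emptyset$, then $\alpha_i(t)=0$ for every $i$; if $I_\lambda^+(t)\neq\emptyset$, then there exists $i\in I_\lambda^+(t)$ with $\alpha_i(t)>0$, and $\sum_j\alpha_j(t)\ge\min(|I_\lambda^+(t)|,M)$.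
   Context: $\mathcal U_M$ is the set of measurable $\alpha:[0,T]\to[0,1]^N$ with $\sum_i\alpha_i(t)\le M$ for all $t$. The variables $\xi_i$ are the projections of the agents' velocities on the direction of the mean velocity in a collective migration model with target velocity $0$. $|\cdot|$ is cardinality. *)

theory Defs
  imports "HOL-Analysis.Analysis"
begin

text \<open>Agents are indexed by i < N (i = 0..N-1 corresponds to 1..N in the paper).
  Time-dependent vectors are functions real => nat => real, only the values for
  t in [0,T] and i < N matter.\<close>

definition mean :: "nat \<Rightarrow> (nat \<Rightarrow> real) \<Rightarrow> real" where
  "mean N x = (\<Sum>j<N. x j) / real N"

definition admissible :: "nat \<Rightarrow> real \<Rightarrow> real \<Rightarrow> (real \<Rightarrow> nat \<Rightarrow> real) \<Rightarrow> bool" where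
  "admissible N M T \<alpha> \<longleftrightarrow>
     (\<forall>i<N. (\<lambda>t. \<alpha> t i) \<in> borel_measurable (lebesgue_on {0..T})) \<and>
     (\<forall>t\<in>{0..T}. (\<forall>i<N. 0 \<le> \<alpha> t i \<and> \<alpha> t i \<le> 1) \<and> (\<Sum>i<N. \<alpha> t i) \<le> M)"

definition state_sol :: "nat \<Rightarrow> real \<Rightarrow> (real \<Rightarrow> nat \<Rightarrow> real) \<Rightarrow> (nat \<Rightarrow> real)
    \<Rightarrow> (real \<Rightarrow> nat \<Rightarrow> real) \<Rightarrow> bool" where
  "state_sol N T \<alpha> \<xi>0 \<xi> \<longleftrightarrow>
     (\<forall>i<N. continuous_on {0..T} (\<lambda>t. \<xi> t i)) \<and>
     (\<forall>t\<in>{0..T}. \<forall>i<N.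
        (\<lambda>s. - \<xi> s i + (1 - \<alpha> s i) * mean N (\<xi> s)) integrable_on {0..t} \<and>
        \<xi> t i = \<xi>0 i + integral {0..t} (\<lambda>s. - \<xi> s i + (1 - \<alpha> s i) * mean N (\<xi> s)))"

definition cost :: "nat \<Rightarrow> real \<Rightarrow> (real \<Rightarrow> nat \<Rightarrow> real) \<Rightarrow> real" where
  "cost N T \<xi> = (\<Sum>i<N. (\<xi> T i)\<^sup>2) / real N"

definition optimal_control :: "nat \<Rightarrow> real \<Rightarrow> real \<Rightarrow> (nat \<Rightarrow> real) \<Rightarrow> (real \<Rightarrow> nat \<Rightarrow> real) \<Rightarrow> bool" where
  "optimal_control N M T \<xi>0 \<alpha> \<longleftrightarrow>
     admissible N M T \<alpha> \<and>
     (\<exists>\<xi>. state_sol N T \<alpha> \<xi>0 \<xi> \<and>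
        (\<forall>\<beta> \<zeta>. admissible N M T \<beta> \<and> state_sol N T \<beta> \<xi>0 \<zeta> \<longrightarrow> cost N T \<xi> \<le> cost N T \<zeta>))"

definition costate_sol :: "nat \<Rightarrow> real \<Rightarrow> (real \<Rightarrow> nat \<Rightarrow> real) \<Rightarrow> (real \<Rightarrow> nat \<Rightarrow> real)
    \<Rightarrow> (real \<Rightarrow> nat \<Rightarrow> real) \<Rightarrow> bool" where
  "costate_sol N T \<alpha> \<xi> lam \<longleftrightarrow>
     (\<forall>i<N. continuous_on {0..T} (\<lambda>t. lam t i)) \<and>
     (\<forall>i<N. lam T i = 2 / real N * \<xi> T i) \<and>
     (\<forall>t\<in>{0..T}. \<forall>i<N.
        (\<lambda>s. mean N (\<lambda>j. \<alpha> s j * lam s j) - mean N (lam s) + lam s i) integrable_on {t..T} \<and>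
        lam t i = lam T i - integral {t..T}
                    (\<lambda>s. mean N (\<lambda>j. \<alpha> s j * lam s j) - mean N (lam s) + lam s i))"

definition pmp_min :: "nat \<Rightarrow> real \<Rightarrow> real \<Rightarrow> (real \<Rightarrow> nat \<Rightarrow> real) \<Rightarrow> (real \<Rightarrow> nat \<Rightarrow> real)
    \<Rightarrow> (real \<Rightarrow> nat \<Rightarrow> real) \<Rightarrow> bool" where
  "pmp_min N M T \<alpha> \<xi> lam \<longleftrightarrow>
     (AE t in lborel. t \<in> {0..T} \<longrightarrow>
        (\<forall>a. (\<forall>i<N. 0 \<le> a i \<and> a i \<le> 1) \<and> (\<Sum>i<N. a i) \<le> M \<longrightarrow>
           - mean N (\<xi> t) * (\<Sum>i<N. \<alpha> t i * lam t i)
             \<le> - mean N (\<xi> t) * (\<Sum>i<N. a i * lam t i)))"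

end

theory Submission
  imports Defs
begin

lemma pointwise:
  fixes x l :: "nat \<Rightarrow> real" and M :: real and N :: nat
  assumes M: "M > 0"
    and fx: "\<forall>i<N. 0 \<le> x i \<and> x i \<le> 1" "(\<Sum>i<N. x i) \<le> M"
    and opt: "\<forall>a. (\<forall>i<N. 0 \<le> a i \<and> a i \<le> 1) \<and> (\<Sum>i<N. a i) \<le> M \<longrightarrow>
               (\<Sum>i<N. a i * l i) \<le> (\<Sum>i<N. x i * l i)"
  shows "({i. i < N \<and> l i \<ge> 0} = {} \<longrightarrow> (\<forall>i<N. x i = 0)) \<and>
           ({i. i < N \<and> l i > 0} \<noteq> {} \<longrightarrow>
              (\<exists>i<N. l i > 0 \<and> x i > 0) \<and>
              (\<Sum>j<N. x j) \<ge> min (real (card {i. i < N \<and> l i > 0})) M)"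
proof (intro conjI impI)
  assume e: "{i. i < N \<and> l i \<ge> 0} = {}"
  have "(\<Sum>i<N. (\<lambda>_. 0::real) i * l i) \<le> (\<Sum>i<N. x i * l i)"
    using opt[rule_format, of "\<lambda>_. 0"] M by simp
  hence s: "(\<Sum>i<N. - (x i * l i)) \<le> 0" by (simp add: sum_negf)
  have nn: "\<forall>i\<in>{..<N}. 0 \<le> - (x i * l i)"
  proof
    fix i assume "i \<in> {..<N}"
    then have "l i < 0" "x i \<ge> 0" using e fx by auto
    then show "0 \<le> - (x i * l i)" by (simp add: mult_nonneg_nonpos)
  qed
  have "\<forall>i\<in>{..<N}. - (x i * l i) = 0"
    using sum_nonneg_eq_0_iff[of "{..<N}" "\<lambda>i. - (x i * l i)"] nn s
    by (meson finite_lessThan order_antisym sum_nonneg)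
  then have z: "\<And>i. i < N \<Longrightarrow> x i * l i = 0" by auto
  show "\<forall>i<N. x i = 0"
  proof (intro allI impI)
    fix i assume "i < N"
    then have "l i < 0" using e by auto
    then show "x i = 0" using z[OF \<open>i < N\<close>] by simp
  qed
next
  assume ne: "{i. i < N \<and> l i > 0} \<noteq> {}"
  define I where "I = {i. i < N \<and> l i > 0}"
  have finI: "finite I" unfolding I_def by auto
  have IN: "I \<subseteq> {..<N}" unfolding I_def by auto
  show ge: "(\<Sum>j<N. x j) \<ge> min (real (card {i. i < N \<and> l i > 0})) M"
  proof (rule ccontr)
    assume "\<not> ?thesis"
    hence lt1: "(\<Sum>j<N. x j) < real (card I)" and lt2: "(\<Sum>j<N. x j) < M"
      unfolding I_def by auto
    have "\<exists>i\<in>I. x i < 1"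
    proof (rule ccontr)
      assume "\<not> ?thesis"
      hence "\<forall>i\<in>I. 1 \<le> x i" by auto
      hence "(\<Sum>i\<in>I. (1::real)) \<le> (\<Sum>i\<in>I. x i)" using sum_mono[of I "\<lambda>_. (1::real)" x] by simp
      also have "\<dots> \<le> (\<Sum>i<N. x i)" using sum_mono2[OF _ IN, of x] fx by auto
      finally show False using lt1 by simp
    qed
    then obtain i where iI: "i \<in> I" and xi: "x i < 1" by blast
    define \<epsilon> where "\<epsilon> = min (1 - x i) (M - (\<Sum>j<N. x j))"
    have ep: "\<epsilon> > 0" using xi lt2 unfolding \<epsilon>_def by auto
    define a where "a = (\<lambda>j. x j + (if j = i then \<epsilon> else 0))"
    have iN: "i < N" and li: "l i > 0" using iI unfolding I_def by auto
    have sa: "(\<Sum>j<N. a j) = (\<Sum>j<N. x j) + \<epsilon>"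
      unfolding a_def using iN by (simp add: sum.distrib)
    have sal: "(\<Sum>j<N. a j * l j) = (\<Sum>j<N. x j * l j) + \<epsilon> * l i"
    proof -
      have "(\<Sum>j<N. a j * l j) = (\<Sum>j<N. x j * l j + (if j = i then \<epsilon> * l j else 0))"
        unfolding a_def by (intro sum.cong) (auto simp: distrib_right)
      also have "\<dots> = (\<Sum>j<N. x j * l j) + \<epsilon> * l i" using iN by (simp add: sum.distrib)
      finally show ?thesis .
    qed
    have "(\<forall>j<N. 0 \<le> a j \<and> a j \<le> 1) \<and> (\<Sum>j<N. a j) \<le> M"
      using fx ep unfolding sa unfolding a_def \<epsilon>_def by auto
    hence "(\<Sum>j<N. a j * l j) \<le> (\<Sum>j<N. x j * l j)" using opt by blast
    with sal ep li show False using mult_pos_pos[OF ep li] by linarith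
  qed
  show "\<exists>i<N. l i > 0 \<and> x i > 0"
  proof (rule ccontr)
    assume H: "\<not> ?thesis"
    obtain k where kN: "k < N" and lk: "l k > 0" using ne by auto
    have "card I \<ge> 1" using ne finI unfolding I_def
      by (metis One_nat_def Suc_leI card_gt_0_iff)
    hence pos: "(\<Sum>j<N. x j) > 0" using ge M unfolding I_def[symmetric] by linarith
    have "\<exists>j<N. x j > 0"
    proof (rule ccontr)
      assume "\<not> ?thesis"
      hence "\<forall>j\<in>{..<N}. x j \<le> 0" by auto
      hence "(\<Sum>j<N. x j) \<le> 0" using sum_nonpos[of "{..<N}" x] by blast
      with pos show False by simp
    qed
    then obtain j where jN: "j < N" and xj: "x j > 0" by blast
    have lj: "l j \<le> 0" using H jN xj by force
    have xk: "x k = 0" using H kN lk fx by force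
    have kj: "k \<noteq> j" using lk lj by auto
    define a where "a = (\<lambda>i. x i + (if i = k then x j else 0) - (if i = j then x j else 0))"
    have sa: "(\<Sum>i<N. a i) = (\<Sum>i<N. x i)"
      unfolding a_def using kN jN by (simp add: sum.distrib sum_subtractf)
    have sal: "(\<Sum>i<N. a i * l i) = (\<Sum>i<N. x i * l i) + x j * l k - x j * l j"
    proof -
      have "(\<Sum>i<N. a i * l i) = (\<Sum>i<N. x i * l i + (if i = k then x j * l i else 0) - (if i = j then x j * l i else 0))"
        unfolding a_def by (intro sum.cong) (auto simp: distrib_right left_diff_distrib)
      also have "\<dots> = (\<Sum>i<N. x i * l i) + x j * l k - x j * l j" using kN jN by (simp add: sum.distrib sum_subtractf)
      finally show ?thesis .
    qed
    have "(\<forall>i<N. 0 \<le> a i \<and> a i \<le> 1) \<and> (\<Sum>i<N. a i) \<le> M"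
      using fx xk kj kN jN unfolding sa unfolding a_def by auto
    hence "(\<Sum>i<N. a i * l i) \<le> (\<Sum>i<N. x i * l i)" using opt by blast
    moreover have "x j * l k > 0" "x j * l j \<le> 0" using xj lk lj
      by (auto simp: mult_nonneg_nonpos)
    ultimately show False using sal by linarith
  qed
qed

lemma pos_step:
  fixes m g :: "real \<Rightarrow> real"
  assumes cont: "continuous_on {0..T} m"
    and eq: "\<forall>t\<in>{0..T}. g integrable_on {0..t} \<and> m t = m0 + integral {0..t} g"
    and bd: "\<forall>s\<in>{0..T}. \<bar>g s\<bar> \<le> \<bar>m s\<bar>"
    and ab: "0 \<le> a" "a \<le> b" "b \<le> T" "b - a \<le> 1/4" and ma: "m a > 0"
  shows "\<forall>t\<in>{a..b}. m t > 0"
proof -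
  have diff: "\<bar>m t - m a\<bar> \<le> B * (t - a)"
    if t: "t \<in> {a..b}" and B: "0 \<le> B" "\<forall>u\<in>{a..b}. \<bar>m u\<bar> \<le> B" for t B
  proof -
    have tT: "t \<in> {0..T}" and aT: "a \<in> {0..T}" using t ab by auto
    have gi: "g integrable_on {0..t}" and mt: "m t = m0 + integral {0..t} g" using eq tT by auto
    have mA: "m a = m0 + integral {0..a} g" using eq aT by auto
    have "integral {0..a} g + integral {a..t} g = integral {0..t} g"
      using Henstock_Kurzweil_Integration.integral_combine[of 0 a t g] gi ab t by auto
    hence md: "m t - m a = integral {a..t} g" using mt mA by linarith
    have gi2: "g integrable_on cbox a t"
      using integrable_subinterval_real[OF gi, of a t] ab t by auto
    have bnd: "\<And>x. x \<in> cbox a t \<Longrightarrow> norm (g x) \<le> B"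
    proof -
      fix x assume "x \<in> cbox a t"
      hence "x \<in> {a..b}" "x \<in> {0..T}" using t ab by auto
      thus "norm (g x) \<le> B" using bd B by force
    qed
    have "norm (integral (cbox a t) g) \<le> B * (t - a)"
      using integrable_bound[OF B(1) gi2 bnd] t by simp
    thus ?thesis using md t by simp
  qed
  have cab: "continuous_on {a..b} (\<lambda>u. \<bar>m u\<bar>)"
    using continuous_on_subset[OF cont, of "{a..b}"] ab by (auto intro: continuous_intros)
  obtain s where s: "s \<in> {a..b}" and smax: "\<forall>u\<in>{a..b}. \<bar>m u\<bar> \<le> \<bar>m s\<bar>"
    using continuous_attains_sup[OF compact_Icc _ cab] ab by force
  have "\<bar>m s - m a\<bar> \<le> \<bar>m s\<bar> * (s - a)" using diff[OF s _ smax] by simp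
  also have "\<dots> \<le> \<bar>m s\<bar> * (1/4)" using s ab by (intro mult_left_mono) auto
  finally have S: "\<bar>m s\<bar> \<le> 4/3 * m a" using ma by linarith
  show ?thesis
  proof
    fix t assume t: "t \<in> {a..b}"
    have "\<bar>m t - m a\<bar> \<le> \<bar>m s\<bar> * (t - a)" using diff[OF t _ smax] by simp
    also have "\<dots> \<le> \<bar>m s\<bar> * (1/4)" using t ab by (intro mult_left_mono) auto
    finally show "m t > 0" using S ma by linarith
  qed
qed

lemma pos_all:
  fixes m g :: "real \<Rightarrow> real"
  assumes cont: "continuous_on {0..T} m"
    and eq: "\<forall>t\<in>{0..T}. g integrable_on {0..t} \<and> m t = m0 + integral {0..t} g"
    and bd: "\<forall>s\<in>{0..T}. \<bar>g s\<bar> \<le> \<bar>m s\<bar>"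
    and m0: "m0 > 0" and T: "T \<ge> 0"
  shows "\<forall>t\<in>{0..T}. m t > 0"
proof -
  have P: "\<forall>t\<in>{0..T}. t \<le> real k / 4 \<longrightarrow> m t > 0" for k :: nat
  proof (induction k)
    case 0
    have "m 0 = m0" using eq T by auto
    then show ?case using m0 by auto
  next
    case (Suc k)
    show ?case
    proof (intro ballI impI)
      fix t assume t: "t \<in> {0..T}" and tk: "t \<le> real (Suc k) / 4"
      show "m t > 0"
      proof (cases "t \<le> real k / 4")
        case True then show ?thesis using Suc t by auto
      next
        case False
        define a where "a = real k / 4"
        have a: "0 \<le> a" "a \<le> t" "t \<le> T" "t - a \<le> 1/4" "a \<in> {0..T}"
          using False t tk unfolding a_def by auto
        have "m a > 0" using Suc a unfolding a_def by auto
        from pos_step[OF cont eq bd a(1-4) this] show ?thesis using a by auto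
      qed
    qed
  qed
  show ?thesis
  proof
    fix t assume t: "t \<in> {0..T}"
    have "t \<le> real (nat \<lceil>4 * t\<rceil>) / 4" by linarith
    thus "m t > 0" using P t by blast
  qed
qed


theorem proposition4:
  fixes N :: nat and T M :: real
    and \<xi>0 :: "nat \<Rightarrow> real"
    and \<alpha> \<xi> lam :: "real \<Rightarrow> nat \<Rightarrow> real"
  assumes "N \<ge> 1" and "T > 0" and "M > 0"
    and "mean N \<xi>0 > 0"
    and "\<forall>i j. i \<le> j \<and> j < N \<longrightarrow> \<xi>0 j \<le> \<xi>0 i"
    and "optimal_control N M T \<xi>0 \<alpha>"
    and "state_sol N T \<alpha> \<xi>0 \<xi>"
    and "costate_sol N T \<alpha> \<xi> lam"
    and "pmp_min N M T \<alpha> \<xi> lam"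
  shows "AE t in lborel. t \<in> {0..T} \<longrightarrow>
           ({i. i < N \<and> lam t i \<ge> 0} = {} \<longrightarrow> (\<forall>i<N. \<alpha> t i = 0)) \<and>
           ({i. i < N \<and> lam t i > 0} \<noteq> {} \<longrightarrow>
              (\<exists>i<N. lam t i > 0 \<and> \<alpha> t i > 0) \<and>
              (\<Sum>j<N. \<alpha> t j) \<ge> min (real (card {i. i < N \<and> lam t i > 0})) M)"
proof -
  have adm: "admissible N M T \<alpha>" using assms(6) unfolding optimal_control_def by auto
  hence bnds: "\<forall>t\<in>{0..T}. (\<forall>i<N. 0 \<le> \<alpha> t i \<and> \<alpha> t i \<le> 1) \<and> (\<Sum>i<N. \<alpha> t i) \<le> M"
    unfolding admissible_def by auto
  have ss: "\<forall>i<N. continuous_on {0..T} (\<lambda>t. \<xi> t i)"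
    "\<forall>t\<in>{0..T}. \<forall>i<N.
        (\<lambda>s. - \<xi> s i + (1 - \<alpha> s i) * mean N (\<xi> s)) integrable_on {0..t} \<and>
        \<xi> t i = \<xi>0 i + integral {0..t} (\<lambda>s. - \<xi> s i + (1 - \<alpha> s i) * mean N (\<xi> s))"
    using assms(7) unfolding state_sol_def by auto
  define m where "m = (\<lambda>s. mean N (\<xi> s))"
  define h where "h = (\<lambda>i s. - \<xi> s i + (1 - \<alpha> s i) * m s)"
  define g where "g = (\<lambda>s. (1 / real N) * (\<Sum>i<N. h i s))"
  have Npos: "real N > 0" using assms(1) by auto
  have cont: "continuous_on {0..T} m"
    unfolding m_def mean_def
    by (intro continuous_on_divide continuous_on_sum continuous_on_const) (use ss(1) Npos in auto)
  have eq: "\<forall>t\<in>{0..T}. g integrable_on {0..t} \<and> m t = mean N \<xi>0 + integral {0..t} g"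
  proof
    fix t assume t: "t \<in> {0..T}"
    have hi: "\<And>i. i \<in> {..<N} \<Longrightarrow> h i integrable_on {0..t}"
      using ss(2) t unfolding h_def m_def by auto
    have gi: "g integrable_on {0..t}" unfolding g_def
      by (intro integrable_on_mult_right integrable_sum) (use hi in auto)
    have "integral {0..t} g = (1 / real N) * (\<Sum>i<N. integral {0..t} (h i))"
      unfolding g_def using integral_sum[of "{..<N}" h "{0..t}"] hi by simp
    also have "\<dots> = (1 / real N) * (\<Sum>i<N. \<xi> t i - \<xi>0 i)"
      using ss(2) t unfolding h_def m_def by (intro arg_cong[where f="\<lambda>x. (1 / real N) * x"] sum.cong) force+
    also have "\<dots> = m t - mean N \<xi>0"
      unfolding m_def mean_def by (simp add: sum_subtractf diff_divide_distrib)
    finally show "g integrable_on {0..t} \<and> m t = mean N \<xi>0 + integral {0..t} g" using gi by simp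
  qed
  have bd: "\<forall>s\<in>{0..T}. \<bar>g s\<bar> \<le> \<bar>m s\<bar>"
  proof
    fix s assume s: "s \<in> {0..T}"
    have sumxi: "(\<Sum>i<N. \<xi> s i) = real N * m s" unfolding m_def mean_def using Npos by simp
    have "(\<Sum>i<N. h i s) = - (\<Sum>i<N. \<xi> s i) + (\<Sum>i<N. m s) - (\<Sum>i<N. \<alpha> s i) * m s"
      unfolding h_def by (simp add: sum.distrib sum_subtractf left_diff_distrib sum_distrib_right sum_negf)
    also have "\<dots> = - (\<Sum>i<N. \<alpha> s i) * m s" using sumxi by simp
    finally have gs: "g s = - ((\<Sum>i<N. \<alpha> s i) / real N) * m s" unfolding g_def by simp
    have a0: "0 \<le> (\<Sum>i<N. \<alpha> s i)" using bnds s by (intro sum_nonneg) auto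
    have "(\<Sum>i<N. \<alpha> s i) \<le> (\<Sum>i<N. (1::real))" using bnds s by (intro sum_mono) auto
    hence a1: "(\<Sum>i<N. \<alpha> s i) / real N \<le> 1" using Npos by simp
    have a0': "0 \<le> (\<Sum>i<N. \<alpha> s i) / real N" using a0 Npos by simp
    have "\<bar>g s\<bar> = ((\<Sum>i<N. \<alpha> s i) / real N) * \<bar>m s\<bar>" unfolding gs using a0' a0 by (simp add: abs_mult)
    also have "\<dots> \<le> 1 * \<bar>m s\<bar>" using a1 by (intro mult_right_mono) auto
    finally show "\<bar>g s\<bar> \<le> \<bar>m s\<bar>" by simp
  qed
  have mpos: "\<forall>t\<in>{0..T}. m t > 0"
    using pos_all[OF cont eq bd assms(4)] assms(2) by auto
  have pmp: "AE t in lborel. t \<in> {0..T} \<longrightarrow>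
        (\<forall>a. (\<forall>i<N. 0 \<le> a i \<and> a i \<le> 1) \<and> (\<Sum>i<N. a i) \<le> M \<longrightarrow>
           - mean N (\<xi> t) * (\<Sum>i<N. \<alpha> t i * lam t i)
             \<le> - mean N (\<xi> t) * (\<Sum>i<N. a i * lam t i))"
    using assms(9) unfolding pmp_min_def by auto
  show ?thesis
  proof (rule AE_mp[OF pmp], rule AE_I2, intro impI)
    fix t assume H: "t \<in> {0..T} \<longrightarrow>
        (\<forall>a. (\<forall>i<N. 0 \<le> a i \<and> a i \<le> 1) \<and> (\<Sum>i<N. a i) \<le> M \<longrightarrow>
           - mean N (\<xi> t) * (\<Sum>i<N. \<alpha> t i * lam t i)
             \<le> - mean N (\<xi> t) * (\<Sum>i<N. a i * lam t i))"
      and t: "t \<in> {0..T}"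
    have c: "mean N (\<xi> t) > 0" using mpos t unfolding m_def by auto
    have opt: "\<forall>a. (\<forall>i<N. 0 \<le> a i \<and> a i \<le> 1) \<and> (\<Sum>i<N. a i) \<le> M \<longrightarrow>
               (\<Sum>i<N. a i * lam t i) \<le> (\<Sum>i<N. \<alpha> t i * lam t i)"
    proof (intro allI impI)
      fix a assume "(\<forall>i<N. 0 \<le> a i \<and> a i \<le> 1) \<and> (\<Sum>i<N. a i) \<le> M"
      hence "- mean N (\<xi> t) * (\<Sum>i<N. \<alpha> t i * lam t i)
             \<le> - mean N (\<xi> t) * (\<Sum>i<N. a i * lam t i)" using H t by blast
      thus "(\<Sum>i<N. a i * lam t i) \<le> (\<Sum>i<N. \<alpha> t i * lam t i)" using c by simp
    qed
    show "({i. i < N \<and> lam t i \<ge> 0} = {} \<longrightarrow> (\<forall>i<N. \<alpha> t i = 0)) \<and>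
           ({i. i < N \<and> lam t i > 0} \<noteq> {} \<longrightarrow>
              (\<exists>i<N. lam t i > 0 \<and> \<alpha> t i > 0) \<and>
              (\<Sum>j<N. \<alpha> t j) \<ge> min (real (card {i. i < N \<and> lam t i > 0})) M)"
      using pointwise[OF assms(3) _ _ opt] bnds t by blast
  qed
qed

end
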